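(* Let $f:\mathbb{N}^*\to\mathbb{N}^*$ and let $G$ be an $n$-vertex median graph in $\mathcal{U}_f$ with $f(n)\ge 2$. Then there exists a unique vertex $v_0$ of $G$ such that, for every $\Theta$-class $E_i$ of $G$, $v_0$ belongs to the majority halfspace of $E_i$ (the halfspace of strictly larger cardinality).
   Context: Graphs are finite, simple, connected and undirected; a graph is median if for every triple $x,y,z$ of vertices, $I(x,y)\cap I(y,z)\cap I(z,x)$ is a single vertex, where $I(u,v)=\{x: d(u,x)+d(x,v)=d(u,v)\}$. Two edges $uv$, $xy$ are in relation $\Theta_0$ if $u,v,y,x$ form a 4-cycle in which $uv$ and $xy$ are opposite; $\Theta$ is the reflexive–transitive closure of $\Theta_0$ and its classes are the $\Theta$-classes. In a median graph, deleting a $\Theta$-class $E_i$ leaves exactly two connected components with vertex sets $H_i',H_i''$ (the halfspaces). Given $f:\mathbb{N}^*\to\mathbb{N}^*$, a $\Theta$-class $E_i$ of a graph with $n$ vertices is $f$-balanced if $\min\{|H_i'|,|H_i''|\}\ge n/f(n)$, and $f$-unbalanced otherwise. $\mathcal{U}_f$ is the family of median graphs all of whose $\Theta$-classes are $f$-unbalanced. *)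

theory Defs
  imports Complex_Main
begin

definition graph :: "'a set \<Rightarrow> ('a \<Rightarrow> 'a \<Rightarrow> bool) \<Rightarrow> bool" where
  "graph V adj \<longleftrightarrow> finite V \<and> V \<noteq> {} \<and>
     (\<forall>x y. adj x y \<longrightarrow> x \<in> V \<and> y \<in> V) \<and>
     (\<forall>x y. adj x y \<longrightarrow> adj y x) \<and> (\<forall>x. \<not> adj x x) \<and>
     (\<forall>x\<in>V. \<forall>y\<in>V. adj\<^sup>*\<^sup>* x y)"

definition gdist :: "('a \<Rightarrow> 'a \<Rightarrow> bool) \<Rightarrow> 'a \<Rightarrow> 'a \<Rightarrow> nat" where
  "gdist adj u v = (LEAST k. (adj ^^ k) u v)"

definition interval :: "'a set \<Rightarrow> ('a \<Rightarrow> 'a \<Rightarrow> bool) \<Rightarrow> 'a \<Rightarrow> 'a \<Rightarrow> 'a set" where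
  "interval V adj u v = {x\<in>V. gdist adj u x + gdist adj x v = gdist adj u v}"

definition median_graph :: "'a set \<Rightarrow> ('a \<Rightarrow> 'a \<Rightarrow> bool) \<Rightarrow> bool" where
  "median_graph V adj \<longleftrightarrow> graph V adj \<and>
     (\<forall>x\<in>V. \<forall>y\<in>V. \<forall>z\<in>V.
        (\<exists>!m. m \<in> interval V adj x y \<inter> interval V adj y z \<inter> interval V adj z x))"

definition edges :: "('a \<Rightarrow> 'a \<Rightarrow> bool) \<Rightarrow> 'a set set" where
  "edges adj = {{u, v} | u v. adj u v}"

definition theta0 :: "('a \<Rightarrow> 'a \<Rightarrow> bool) \<Rightarrow> ('a set \<times> 'a set) set" where
  "theta0 adj = {({u, v}, {x, y}) | u v x y.
      adj u v \<and> adj v y \<and> adj y x \<and> adj x u \<and>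
      u \<noteq> y \<and> v \<noteq> x}"

definition theta :: "('a \<Rightarrow> 'a \<Rightarrow> bool) \<Rightarrow> ('a set \<times> 'a set) set" where
  "theta adj = (theta0 adj)\<^sup>*"

definition theta_classes :: "('a \<Rightarrow> 'a \<Rightarrow> bool) \<Rightarrow> 'a set set set" where
  "theta_classes adj = edges adj // theta adj"

definition del_edges :: "('a \<Rightarrow> 'a \<Rightarrow> bool) \<Rightarrow> 'a set set \<Rightarrow> 'a \<Rightarrow> 'a \<Rightarrow> bool" where
  "del_edges adj C x y \<longleftrightarrow> adj x y \<and> {x, y} \<notin> C"

definition component :: "'a set \<Rightarrow> ('a \<Rightarrow> 'a \<Rightarrow> bool) \<Rightarrow> 'a \<Rightarrow> 'a set" where
  "component V adj x = {y\<in>V. adj\<^sup>*\<^sup>* x y}"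

definition components :: "'a set \<Rightarrow> ('a \<Rightarrow> 'a \<Rightarrow> bool) \<Rightarrow> 'a set set" where
  "components V adj = component V adj ` V"

definition halfspaces :: "'a set \<Rightarrow> ('a \<Rightarrow> 'a \<Rightarrow> bool) \<Rightarrow> 'a set set \<Rightarrow> 'a set set" where
  "halfspaces V adj C = components V (del_edges adj C)"

definition f_balanced :: "(nat \<Rightarrow> nat) \<Rightarrow> 'a set \<Rightarrow> ('a \<Rightarrow> 'a \<Rightarrow> bool) \<Rightarrow> 'a set set \<Rightarrow> bool" where
  "f_balanced f V adj C \<longleftrightarrow>
     real (Min (card ` halfspaces V adj C)) \<ge> real (card V) / real (f (card V))"

definition in_U :: "(nat \<Rightarrow> nat) \<Rightarrow> 'a set \<Rightarrow> ('a \<Rightarrow> 'a \<Rightarrow> bool) \<Rightarrow> bool" where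
  "in_U f V adj \<longleftrightarrow> median_graph V adj \<and>
     (\<forall>C\<in>theta_classes adj. \<not> f_balanced f V adj C)"

definition in_majority_halfspace :: "'a set \<Rightarrow> ('a \<Rightarrow> 'a \<Rightarrow> bool) \<Rightarrow> 'a set set \<Rightarrow> 'a \<Rightarrow> bool" where
  "in_majority_halfspace V adj C v \<longleftrightarrow>
     (\<forall>H\<in>halfspaces V adj C. H \<noteq> component V (del_edges adj C) v \<longrightarrow>
        card H < card (component V (del_edges adj C) v))"

end

theory Submission
  imports Defs
begin


locale mg =
  fixes V :: "'a set" and adj :: "'a \<Rightarrow> 'a \<Rightarrow> bool"
  assumes med: "median_graph V adj"
begin

abbreviation "d \<equiv> gdist adj"
abbreviation "I \<equiv> interval V adj"

lemma gr: "graph V adj" using med unfolding median_graph_def by blast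
lemma finV: "finite V" using gr unfolding graph_def by blast
lemma neV: "V \<noteq> {}" using gr unfolding graph_def by blast
lemma adjV: "adj x y \<Longrightarrow> x \<in> V \<and> y \<in> V" using gr unfolding graph_def by blast
lemma adj_sym: "adj x y \<Longrightarrow> adj y x" using gr unfolding graph_def by blast
lemma irr: "\<not> adj x x" using gr unfolding graph_def by blast
lemma conn: "x\<in>V \<Longrightarrow> y\<in>V \<Longrightarrow> adj\<^sup>*\<^sup>* x y" using gr unfolding graph_def by blast
lemma medex: "x\<in>V \<Longrightarrow> y\<in>V \<Longrightarrow> z\<in>V \<Longrightarrow> \<exists>!m. m \<in> I x y \<inter> I y z \<inter> I z x"
  using med unfolding median_graph_def by blast

lemma pow_ex: "x\<in>V \<Longrightarrow> y\<in>V \<Longrightarrow> \<exists>k. (adj^^k) x y"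
  using conn rtranclp_power by metis

lemma d_path: "x\<in>V \<Longrightarrow> y\<in>V \<Longrightarrow> (adj^^(d x y)) x y"
  unfolding gdist_def by (rule LeastI_ex) (rule pow_ex)

lemma d_le: "(adj^^k) x y \<Longrightarrow> d x y \<le> k"
  unfolding gdist_def by (rule Least_le)

lemma pow_add: "(adj^^m) x y \<Longrightarrow> (adj^^n) y z \<Longrightarrow> (adj^^(m+n)) x z"
  by (auto simp: relpowp_add)

lemma tri: "x\<in>V \<Longrightarrow> y\<in>V \<Longrightarrow> z\<in>V \<Longrightarrow> d x z \<le> d x y + d y z"
  by (meson d_le d_path pow_add)

lemma pow_sym: "(adj^^k) x y \<Longrightarrow> (adj^^k) y x"
proof (induction k arbitrary: x y)
  case 0 then show ?case by (auto elim: relpowp_0_E intro: relpowp_0_I)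
next
  case (Suc k)
  then obtain w where "adj x w" "(adj^^k) w y" using relpowp_Suc_D2 by metis
  then show ?case using Suc.IH adj_sym relpowp_Suc_I by metis
qed

lemma d_sym: "d x y = d y x"
  unfolding gdist_def using pow_sym by metis

lemma d0[simp]: "d x x = 0"
  using d_le[OF relpowp_0_I] by simp

lemma d0_eq: "d x y = 0 \<Longrightarrow> x\<in>V \<Longrightarrow> y\<in>V \<Longrightarrow> x = y"
  using d_path by (metis relpowp_0_E)

lemma d_adj: "adj x y \<Longrightarrow> d x y = 1"
proof -
  assume a: "adj x y"
  have "(adj^^1) x y" using a by (simp only: relpowp_1)
  then have "d x y \<le> 1" by (rule d_le)
  moreover have "d x y \<noteq> 0" using d0_eq a irr adjV by metis
  ultimately show ?thesis by simp
qed

lemma d1_adj: "d x y = 1 \<Longrightarrow> x\<in>V \<Longrightarrow> y\<in>V \<Longrightarrow> adj x y"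
  using d_path by fastforce

lemma d_step: "x\<in>V \<Longrightarrow> y\<in>V \<Longrightarrow> d x y = Suc k \<Longrightarrow> \<exists>w. adj x w \<and> d w y = k"
proof -
  assume xy: "x\<in>V" "y\<in>V" "d x y = Suc k"
  then obtain w where w: "adj x w" "(adj^^k) w y" using d_path relpowp_Suc_D2 by metis
  have "d w y \<le> k" using w d_le by blast
  moreover have "d x y \<le> d x w + d w y" using tri xy w adjV by blast
  ultimately show ?thesis using w d_adj xy by force
qed

lemma d_adj_le: "adj x y \<Longrightarrow> z\<in>V \<Longrightarrow> d x z \<le> Suc (d y z)"
  using tri[of x y z] d_adj adjV by force

lemma I_iff: "w \<in> I x y \<longleftrightarrow> w \<in> V \<and> d x w + d w y = d x y"
  unfolding interval_def by blast

lemma I_sym: "w \<in> I x y \<longleftrightarrow> w \<in> I y x"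
  unfolding I_iff using d_sym by (metis add.commute)

definition med where "med x y z = (THE m. m \<in> I x y \<inter> I y z \<inter> I z x)"

lemma med_in: "x\<in>V \<Longrightarrow> y\<in>V \<Longrightarrow> z\<in>V \<Longrightarrow> med x y z \<in> I x y \<inter> I y z \<inter> I z x"
  unfolding med_def using medex theI' by metis

lemma med_uniq: "x\<in>V \<Longrightarrow> y\<in>V \<Longrightarrow> z\<in>V \<Longrightarrow> m \<in> I x y \<inter> I y z \<inter> I z x \<Longrightarrow> m = med x y z"
  using med_in medex by metis

lemma bip: "adj a b \<Longrightarrow> x\<in>V \<Longrightarrow> d a x \<noteq> d b x"
proof
  assume ab: "adj a b" and x: "x\<in>V" and eq: "d a x = d b x"
  have V: "a\<in>V" "b\<in>V" using ab adjV by auto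
  obtain m where m: "m \<in> I a b" "m \<in> I b x" "m \<in> I x a" using medex[OF V x] by blast
  have "d a m + d m b = 1" using m(1) d_adj[OF ab] I_iff by simp
  then have "d a m = 0 \<or> d m b = 0" by arith
  then have "m = a \<or> m = b" using d0_eq m(1) V I_iff by metis
  then show False
  proof
    assume "m = a" then show False using m(2) I_iff d_adj[OF ab] d_sym eq by simp
  next
    assume "m = b" then show False using m(3) I_iff d_adj[OF ab] d_sym eq by simp
  qed
qed

end

context mg begin

definition W where "W a b = {x\<in>V. d a x < d b x}"

lemma W_suc: "adj a b \<Longrightarrow> x \<in> W a b \<Longrightarrow> d b x = Suc (d a x)"
  unfolding W_def using d_adj_le[of b a x] adj_sym by force

lemma W_part: "adj a b \<Longrightarrow> x\<in>V \<Longrightarrow> x \<in> W a b \<or> x \<in> W b a"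
proof -
  assume "adj a b" "x\<in>V"
  then have "d a x \<noteq> d b x" by (rule bip)
  then show ?thesis unfolding W_def using \<open>x\<in>V\<close> by auto
qed

lemma W_disj: "x \<in> W a b \<Longrightarrow> x \<in> W b a \<Longrightarrow> False"
  unfolding W_def by auto

lemma WV: "x \<in> W a b \<Longrightarrow> x \<in> V" unfolding W_def by auto

lemma a_W: "adj a b \<Longrightarrow> a \<in> W a b"
  unfolding W_def using d_adj adjV d_sym by fastforce

lemma W_int: "adj a b \<Longrightarrow> u \<in> W a b \<Longrightarrow> w \<in> I u a \<Longrightarrow> w \<in> W a b"
proof -
  assume ab: "adj a b" and u: "u \<in> W a b" and w: "w \<in> I u a"
  have V: "a\<in>V" "b\<in>V" "u\<in>V" "w\<in>V" using ab adjV u WV w I_iff by auto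
  have 1: "d u w + d w a = d u a" using w I_iff by simp
  have 2: "d b u = Suc (d a u)" using W_suc ab u by blast
  have 3: "d u b \<le> d u w + d w b" using tri V by blast
  have "d a w < d b w" using 1 2 3 d_sym[of a w] d_sym[of b w] d_sym[of u a] d_sym[of u b] by linarith
  then show ?thesis unfolding W_def using V by blast
qed

lemma I_mono: "y \<in> I x z \<Longrightarrow> w \<in> I x y \<Longrightarrow> x\<in>V \<Longrightarrow> z\<in>V \<Longrightarrow> w \<in> I x z"
proof -
  assume y: "y \<in> I x z" and w: "w \<in> I x y" and V: "x\<in>V" "z\<in>V"
  have V2: "y\<in>V" "w\<in>V" using y w I_iff by auto
  have "d w z \<le> d w y + d y z" using tri V V2 by blast
  moreover have "d x z \<le> d x w + d w z" using tri V V2 by blast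
  ultimately show ?thesis using y w I_iff V2 by simp
qed

lemma L1: "w \<in> I x y \<Longrightarrow> w \<in> I x z \<Longrightarrow> m \<in> I x y \<Longrightarrow> m \<in> I y z \<Longrightarrow> m \<in> I z x
   \<Longrightarrow> x\<in>V \<Longrightarrow> y\<in>V \<Longrightarrow> z\<in>V \<Longrightarrow> w \<in> I x m"
proof -
  assume w1: "w \<in> I x y" and w2: "w \<in> I x z" and m: "m \<in> I x y" "m \<in> I y z" "m \<in> I z x"
    and V: "x\<in>V" "y\<in>V" "z\<in>V"
  have wV: "w\<in>V" "m\<in>V" using w1 m I_iff by auto
  define m' where "m' = med w y z"
  have m': "m' \<in> I w y" "m' \<in> I y z" "m' \<in> I z w" using med_in[OF wV(1) V(2,3)] m'_def by auto
  have m'V: "m'\<in>V" using m' I_iff by auto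
  have a: "m' \<in> I x y"
  proof -
    have "d x m' \<le> d x w + d w m'" using tri V wV m'V by blast
    moreover have "d x y \<le> d x m' + d m' y" using tri V wV m'V by blast
    ultimately show ?thesis using m'(1) w1 I_iff m'V by simp
  qed
  have b: "m' \<in> I z x"
  proof -
    have "d x m' \<le> d x w + d w m'" using tri V wV m'V by blast
    moreover have "d x z \<le> d x m' + d m' z" using tri V wV m'V by blast
    moreover have "d z m' + d m' w = d z w" using m'(3) I_iff by simp
    ultimately have "m' \<in> I x z" using w2 I_iff m'V d_sym by (simp add: add.commute)
    then show ?thesis using I_sym by blast
  qed
  have "m' = m" using med_uniq[OF V] a b m'(2) m by blast
  then have eq: "d x y = d x w + d w m + d m y" using m'(1) w1 I_iff by simp
  have "d x m \<le> d x w + d w m" using tri V wV by blast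
  then show ?thesis using eq m(1) I_iff wV by simp
qed

lemma convex_W: "adj a b \<Longrightarrow> x \<in> W a b \<Longrightarrow> y \<in> W a b \<Longrightarrow> z \<in> I x y \<Longrightarrow> z \<in> W a b"
proof (induction "d x y" arbitrary: x y z rule: less_induct)
  case less
  note ab = less.prems(1)
  have V: "a\<in>V" "b\<in>V" "x\<in>V" "y\<in>V" "z\<in>V" using ab adjV less.prems WV I_iff by auto
  show ?case
  proof (cases "z = x")
    case True then show ?thesis using less.prems by simp
  next
    case False
    then have "d x z \<noteq> 0" using d0_eq V by metis
    then obtain j where j: "d x z = Suc j" using not0_implies_Suc by blast
    then obtain x' where x': "adj x x'" "d x' z = j" using d_step V by blast
    have x'V: "x'\<in>V" using x' adjV by auto
    have zI: "d x z + d z y = d x y" using less.prems(4) I_iff by simp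
    have t1: "d x' y \<le> d x' z + d z y" using tri x'V V by blast
    have t2: "d x y \<le> d x x' + d x' y" using tri x'V V by blast
    have dx': "d x x' = 1" using d_adj x' by simp
    have x'I: "x' \<in> I x y" using t1 t2 dx' zI j x' x'V I_iff by simp
    have zI': "z \<in> I x' y" using t1 t2 dx' zI j x' V I_iff by simp
    have lt: "d x' y < d x y" using t1 t2 dx' zI j x' by simp
    have x'W: "x' \<in> W a b"
    proof (rule ccontr)
      assume nW: "x' \<notin> W a b"
      then have x'W': "x' \<in> W b a" using W_part ab x'V by blast
      have s1: "d a x' = Suc (d b x')" using W_suc[OF adj_sym[OF ab] x'W'] .
      have s2: "d b x = Suc (d a x)" using W_suc[OF ab less.prems(2)] .
      have s3: "d a x' \<le> Suc (d a x)" using d_adj_le[of x' x a] adj_sym x' V d_sym by metis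
      have s4: "d x b \<le> Suc (d x' b)" using d_adj_le[of x x' b] x' V by metis
      have x'Ib: "x' \<in> I x b" using s1 s2 s3 s4 dx' x'V I_iff d_sym by simp
      have aIb: "a \<in> I x b" using s2 d_adj[OF ab] V I_iff d_sym by simp
      have aIb2: "a \<in> I y b" using W_suc[OF ab less.prems(3)] d_adj[OF ab] V I_iff d_sym by simp
      define m where "m = med x y a"
      have m: "m \<in> I x y" "m \<in> I y a" "m \<in> I a x" using med_in[OF V(3,4,1)] m_def by auto
      have mb1: "m \<in> I x b" using I_mono[OF aIb] m(3) I_sym V by blast
      have mb2: "m \<in> I y b" using I_mono[OF aIb2] m(2) V by blast
      have x'm: "x' \<in> I x m" using L1[OF x'I x'Ib m(1) mb2] mb1 I_sym V by blast
      have mW: "m \<in> W a b" using W_int[OF ab less.prems(2)] m(3) I_sym by blast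
      show False
      proof (cases "d x m < d x y")
        case True
        then show False using less.hyps[OF True ab less.prems(2) mW x'm] nW by blast
      next
        case False
        have "d x m + d m y = d x y" using m(1) I_iff by simp
        then have "d m y = 0" using False by simp
        then have "m = y" using d0_eq m(1) I_iff V by metis
        then have "x' \<in> I x a" using I_mono[of y x a x'] m(3) I_sym x'I V by blast
        then show False using W_int[OF ab less.prems(2)] nW by blast
      qed
    qed
    show ?thesis using less.hyps[OF lt ab x'W less.prems(3) zI'] .
  qed
qed

end

context mg begin

lemma dist2: "adj u v \<Longrightarrow> adj v y \<Longrightarrow> u \<noteq> y \<Longrightarrow> d u y = 2 \<and> v \<in> I u y"
proof -
  assume a: "adj u v" "adj v y" "u \<noteq> y"
  have V: "u\<in>V" "v\<in>V" "y\<in>V" using a adjV by auto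
  have "d u y \<le> d u v + d v y" using tri V by blast
  then have le: "d u y \<le> 2" using d_adj a by simp
  have "d u y \<noteq> 0" using d0_eq V a by blast
  moreover have "d u y \<noteq> 1"
  proof
    assume "d u y = 1"
    then have "adj u y" using d1_adj V by blast
    then have "d u v \<noteq> d y v" using bip V by blast
    then show False using d_adj a d_sym by metis
  qed
  ultimately have "d u y = 2" using le by linarith
  then show ?thesis using d_adj a V I_iff by simp
qed

lemma sq_side: "adj a b \<Longrightarrow> adj u v \<Longrightarrow> adj v y \<Longrightarrow> u \<noteq> y \<Longrightarrow> u \<in> W a b \<Longrightarrow> y \<in> W a b \<Longrightarrow> v \<in> W a b"
  using dist2 convex_W by blast

lemma quad: "u\<in>V \<Longrightarrow> v \<noteq> w \<Longrightarrow> adj v x \<Longrightarrow> adj w x \<Longrightarrow> d u v = d u w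
   \<Longrightarrow> \<exists>m. adj v m \<and> adj w m \<and> Suc (d u m) = d u v"
proof -
  assume a: "u\<in>V" "v \<noteq> w" "adj v x" "adj w x" "d u v = d u w"
  have V: "v\<in>V" "w\<in>V" "x\<in>V" using a adjV by auto
  have 2: "d v w = 2" using dist2[of v x w] a adj_sym by blast
  define m where "m = med u v w"
  have m: "m \<in> I u v" "m \<in> I v w" "m \<in> I w u" using med_in[OF a(1) V(1,2)] m_def by auto
  have mV: "m \<in> V" using m I_iff by auto
  have e1: "d u m + d m v = d u v" "d v m + d m w = 2" "d w m + d m u = d w u"
    using m I_iff 2 by auto
  have e2: "d m v = d m w" using e1 a(5) d_sym[of m u] d_sym[of w u] d_sym[of m w] by linarith
  have e3: "d v m = 1" "d w m = 1" using e1 e2 d_sym[of v m] d_sym[of w m] by linarith+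
  then show ?thesis using d1_adj V mV e1 e3 d_sym[of m v] by force
qed

definition F where "F a b = {{x,y} | x y. adj x y \<and> x \<in> W a b \<and> y \<in> W b a}"

lemma FI: "adj x y \<Longrightarrow> x \<in> W a b \<Longrightarrow> y \<in> W b a \<Longrightarrow> {x,y} \<in> F a b"
  unfolding F_def by blast

lemma FE: "e \<in> F a b \<Longrightarrow> (\<And>x y. e = {x,y} \<Longrightarrow> adj x y \<Longrightarrow> x \<in> W a b \<Longrightarrow> y \<in> W b a \<Longrightarrow> P) \<Longrightarrow> P"
  unfolding F_def by blast

lemma F_sub: "F a b \<subseteq> F b a"
proof
  fix e assume "e \<in> F a b"
  then obtain x y where h: "e = {x,y}" "adj x y" "x \<in> W a b" "y \<in> W b a" by (rule FE)
  have "e = {y,x}" using h(1) by (simp add: insert_commute)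
  then show "e \<in> F b a" using FI[of y x b a] h adj_sym by simp
qed

lemma F_sym: "F a b = F b a"
  using F_sub by blast

lemma FI': "adj x y \<Longrightarrow> x \<in> W b a \<Longrightarrow> y \<in> W a b \<Longrightarrow> {x,y} \<in> F a b"
  using FI[of x y b a] F_sym by simp

lemma theta0I: "adj u v \<Longrightarrow> adj v y \<Longrightarrow> adj y x \<Longrightarrow> adj x u \<Longrightarrow> u\<noteq>y \<Longrightarrow> v\<noteq>x \<Longrightarrow> ({u,v},{x,y}) \<in> theta0 adj"
  unfolding theta0_def by blast

lemma theta0_pres: "adj a b \<Longrightarrow> (e1, e2) \<in> theta0 adj \<Longrightarrow> e1 \<in> F a b \<Longrightarrow> e2 \<in> F a b"
proof -
  assume ab: "adj a b" and t: "(e1, e2) \<in> theta0 adj" and e1: "e1 \<in> F a b"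
  obtain u v x y where uv: "e1 = {u,v}" "e2 = {x,y}" "adj u v" "adj v y" "adj y x" "adj x u" "u \<noteq> y" "v \<noteq> x"
    using t unfolding theta0_def by blast
  have ba: "adj b a" using ab adj_sym by blast
  have V: "u\<in>V" "v\<in>V" "x\<in>V" "y\<in>V" using uv adjV by auto
  have c: "(u \<in> W a b \<and> v \<in> W b a) \<or> (u \<in> W b a \<and> v \<in> W a b)"
    using e1 uv(1) by (elim FE) (auto simp: doubleton_eq_iff)
  have s1: "\<And>p q. adj p q \<Longrightarrow> u \<in> W p q \<Longrightarrow> y \<in> W p q \<Longrightarrow> v \<in> W p q"
    using sq_side uv by blast
  have s2: "\<And>p q. adj p q \<Longrightarrow> v \<in> W p q \<Longrightarrow> x \<in> W p q \<Longrightarrow> u \<in> W p q"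
    using sq_side[of _ _ v u x] uv adj_sym by blast
  from c show ?thesis
  proof
    assume h: "u \<in> W a b \<and> v \<in> W b a"
    have "y \<in> W b a" using W_part[OF ab V(4)] s1[OF ab] h W_disj by blast
    moreover have "x \<in> W a b" using W_part[OF ab V(3)] s2[OF ba] h W_disj by blast
    ultimately show ?thesis using uv FI adj_sym by metis
  next
    assume h: "u \<in> W b a \<and> v \<in> W a b"
    have "y \<in> W a b" using W_part[OF ab V(4)] s1[OF ba] h W_disj by blast
    moreover have "x \<in> W b a" using W_part[OF ab V(3)] s2[OF ab] h W_disj by blast
    ultimately show ?thesis using uv FI' adj_sym by metis
  qed
qed

lemma theta_sub: assumes ab: "adj a b" and t: "(e1, e2) \<in> theta adj" and e: "e1 \<in> F a b"
  shows "e2 \<in> F a b"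
  using t e unfolding theta_def
  by (induction rule: rtrancl_induct) (auto intro: theta0_pres[OF ab])

lemma F_sub_theta: "adj a b \<Longrightarrow> adj x y \<Longrightarrow> x \<in> W a b \<Longrightarrow> y \<in> W b a \<Longrightarrow> ({a,b},{x,y}) \<in> theta adj"
proof (induction "d a x" arbitrary: x y)
  case 0
  have V: "a\<in>V" "b\<in>V" "x\<in>V" "y\<in>V" using 0 adjV by auto
  have "x = a" using 0 d0_eq V by metis
  have s: "d a y = Suc (d b y)" using W_suc[OF adj_sym[OF 0(2)] 0(5)] .
  have "d a y \<le> Suc (d a x)" using d_adj_le[of y x a] 0 adj_sym V d_sym by metis
  then have "d b y = 0" using s 0(1) by simp
  then have "y = b" using d0_eq V by metis
  then show ?case using \<open>x = a\<close> unfolding theta_def by simp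
next
  case (Suc j)
  note ab = Suc.prems(1)
  have V: "a\<in>V" "b\<in>V" "x\<in>V" "y\<in>V" using Suc.prems adjV by auto
  have sx: "d b x = Suc (d a x)" using W_suc[OF ab Suc.prems(3)] .
  have sy: "d a y = Suc (d b y)" using W_suc[OF adj_sym[OF ab] Suc.prems(4)] .
  have t1: "d a y \<le> Suc (d a x)" using d_adj_le[of y x a] Suc.prems adj_sym V d_sym by metis
  have t2: "d b x \<le> Suc (d b y)" using d_adj_le[of x y b] Suc.prems V d_sym by metis
  have dy: "d b y = Suc j" using sx sy t1 t2 Suc.hyps(2) by linarith
  obtain w where w: "adj x w" "d w a = j" using d_step[OF V(3,1)] Suc.hyps(2) d_sym by metis
  have wV: "w\<in>V" using w adjV by auto
  have wI: "w \<in> I x a" using w d_adj Suc.hyps(2) d_sym[of x a] wV I_iff by simp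
  have wW: "w \<in> W a b" using W_int[OF ab Suc.prems(3) wI] .
  have dw: "d b w = Suc j" using W_suc[OF ab wW] w(2) d_sym by metis
  have wy: "w \<noteq> y" using wW Suc.prems(4) W_disj by blast
  obtain m where m: "adj w m" "adj y m" "Suc (d b m) = d b w"
    using quad[OF V(2) wy adj_sym[OF w(1)] adj_sym[OF Suc.prems(2)]] dw dy by metis
  have mV: "m\<in>V" using m adjV by auto
  have mW: "m \<in> W b a"
  proof (rule ccontr)
    assume "m \<notin> W b a"
    then have "m \<in> W a b" using W_part[OF ab mV] by blast
    then have "d a m < d b m" unfolding W_def by simp
    moreover have "d a y \<le> Suc (d a m)" using d_adj_le[of y m a] m V d_sym by metis
    ultimately show False using sy dy m(3) dw by linarith
  qed
  have ih: "({a,b},{w,m}) \<in> theta adj" using Suc.hyps(1)[of w m] w(2) d_sym ab m(1) wW mW by metis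
  have "({w,m},{x,y}) \<in> theta0 adj"
  proof -
    have "m \<noteq> x" using mW Suc.prems(3) W_disj by blast
    then show ?thesis using theta0I[of w m y x] m(1) adj_sym[OF m(2)] adj_sym[OF Suc.prems(2)] w(1) wy
      by blast
  qed
  then show ?case using ih unfolding theta_def by (rule rtrancl_into_rtrancl[rotated])
qed

lemma class_F: "adj a b \<Longrightarrow> theta adj `` {{a,b}} = F a b"
proof
  assume ab: "adj a b"
  have abF: "{a,b} \<in> F a b" using FI ab a_W adj_sym by blast
  show "theta adj `` {{a,b}} \<subseteq> F a b" using theta_sub[OF ab] abF by blast
  show "F a b \<subseteq> theta adj `` {{a,b}}"
  proof
    fix e assume "e \<in> F a b"
    then obtain x y where h: "e = {x,y}" "adj x y" "x \<in> W a b" "y \<in> W b a" by (rule FE)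
    then show "e \<in> theta adj `` {{a,b}}" using F_sub_theta[OF ab h(2-4)] by simp
  qed
qed

lemma classes_F: "C \<in> theta_classes adj \<Longrightarrow> \<exists>a b. adj a b \<and> C = F a b"
proof -
  assume "C \<in> theta_classes adj"
  then obtain e where e: "e \<in> edges adj" "C = theta adj `` {e}"
    unfolding theta_classes_def quotient_def by blast
  then obtain a b where "e = {a,b}" "adj a b" unfolding edges_def by blast
  then show ?thesis using e class_F by blast
qed

end

context mg begin

abbreviation "R a b \<equiv> del_edges adj (F a b)"

lemma R_sym: "R a b x y \<Longrightarrow> R a b y x"
  unfolding del_edges_def using adj_sym by (metis insert_commute)

lemma R_rt_sym: "(R a b)\<^sup>*\<^sup>* x y \<Longrightarrow> (R a b)\<^sup>*\<^sup>* y x"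
proof (induction rule: rtranclp_induct)
  case base then show ?case by simp
next
  case (step y z)
  then show ?case using R_sym converse_rtranclp_into_rtranclp by metis
qed

lemma R_side: assumes ab: "adj a b" and r: "(R a b)\<^sup>*\<^sup>* x y" and x: "x \<in> W a b" shows "y \<in> W a b"
  using r x
proof (induction rule: rtranclp_induct)
  case base then show ?case by simp
next
  case (step y z)
  have h: "adj y z" "{y,z} \<notin> F a b" using step(2) unfolding del_edges_def by auto
  have yW: "y \<in> W a b" using step by blast
  have "z \<in> V" using h adjV by blast
  then show ?case using W_part[OF ab] FI[OF h(1) yW] h(2) by blast
qed

lemma reach: assumes ab: "adj a b" shows "y \<in> W a b \<Longrightarrow> (R a b)\<^sup>*\<^sup>* a y"
proof (induction "d y a" arbitrary: y)
  case 0
  have "y = a" using 0 d0_eq WV adjV ab by metis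
  then show ?case by simp
next
  case (Suc j)
  have V: "a\<in>V" "y\<in>V" using ab adjV Suc.prems WV by auto
  obtain w where w: "adj y w" "d w a = j" using d_step[OF V(2,1)] Suc.hyps(2) by metis
  have wV: "w\<in>V" using w adjV by auto
  have wI: "w \<in> I y a" using w d_adj Suc.hyps(2) wV I_iff by simp
  have wW: "w \<in> W a b" using W_int[OF ab Suc.prems wI] .
  have ih: "(R a b)\<^sup>*\<^sup>* a w" using Suc.hyps(1) w(2) wW by metis
  have "{w,y} \<notin> F a b"
  proof
    assume "{w,y} \<in> F a b"
    then obtain p q where "{w,y} = {p,q}" "p \<in> W a b" "q \<in> W b a" by (rule FE)
    then show False using wW Suc.prems W_disj by (auto simp: doubleton_eq_iff)
  qed
  then have "R a b w y" unfolding del_edges_def using w adj_sym by blast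
  then show ?case using ih by (meson rtranclp.rtrancl_into_rtrancl)
qed

lemma comp_W: assumes ab: "adj a b" and x: "x \<in> W a b"
  shows "component V (R a b) x = W a b"
proof
  show "component V (R a b) x \<subseteq> W a b"
    unfolding component_def using R_side[OF ab _ x] by blast
  show "W a b \<subseteq> component V (R a b) x"
  proof
    fix y assume y: "y \<in> W a b"
    have "(R a b)\<^sup>*\<^sup>* x a" using R_rt_sym reach[OF ab x] by blast
    then have "(R a b)\<^sup>*\<^sup>* x y" using reach[OF ab y] by simp
    then show "y \<in> component V (R a b) x" unfolding component_def using y WV by blast
  qed
qed

lemma comp_W': assumes ab: "adj a b" and x: "x \<in> W b a"
  shows "component V (R a b) x = W b a"
  using comp_W[OF adj_sym[OF ab] x] F_sym by simp

lemma halfsp: assumes ab: "adj a b" shows "halfspaces V adj (F a b) = {W a b, W b a}"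
proof -
  have V: "a\<in>V" "b\<in>V" using ab adjV by auto
  have "component V (R a b) x \<in> {W a b, W b a}" if "x\<in>V" for x
    using W_part[OF ab that] comp_W[OF ab] comp_W'[OF ab] by blast
  moreover have "component V (R a b) a = W a b" using comp_W[OF ab a_W[OF ab]] .
  moreover have "component V (R a b) b = W b a" using comp_W'[OF ab a_W[OF adj_sym[OF ab]]] .
  ultimately show ?thesis unfolding halfspaces_def components_def using V by blast
qed

lemma W_un: "adj a b \<Longrightarrow> W a b \<union> W b a = V"
  using W_part WV by blast

lemma W_card: "adj a b \<Longrightarrow> card (W a b) + card (W b a) = card V"
proof -
  assume ab: "adj a b"
  have "finite (W a b)" "finite (W b a)" using finV WV by (meson finite_subset subsetI)+
  moreover have "W a b \<inter> W b a = {}" using W_disj by blast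
  ultimately show ?thesis using card_Un_disjoint W_un[OF ab] by metis
qed

lemma W_ne_other: "adj a b \<Longrightarrow> W b a \<noteq> W a b"
  using a_W W_disj by blast

lemma maj: assumes ab: "adj a b" and v: "v \<in> W a b" and c: "card V < 2 * card (W a b)"
  shows "in_majority_halfspace V adj (F a b) v"
  unfolding in_majority_halfspace_def halfsp[OF ab] comp_W[OF ab v]
  using W_card[OF ab] c by auto

definition conv where "conv A \<longleftrightarrow> A \<subseteq> V \<and> (\<forall>x\<in>A. \<forall>y\<in>A. I x y \<subseteq> A)"

lemma conv_W: "adj a b \<Longrightarrow> conv (W a b)"
  unfolding conv_def using convex_W WV by blast

lemma conv_Int: "conv A \<Longrightarrow> conv B \<Longrightarrow> conv (A \<inter> B)"
  unfolding conv_def by blast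

lemma helly3: assumes "conv A" "conv B" "conv C" "A \<inter> B \<noteq> {}" "B \<inter> C \<noteq> {}" "A \<inter> C \<noteq> {}"
  shows "A \<inter> B \<inter> C \<noteq> {}"
proof -
  obtain a b c where abc: "a \<in> B \<inter> C" "b \<in> A \<inter> C" "c \<in> A \<inter> B" using assms(4-6) by blast
  have V: "a\<in>V" "b\<in>V" "c\<in>V" using abc assms(1,2) unfolding conv_def by blast+
  have m: "med a b c \<in> I a b \<inter> I b c \<inter> I c a" using med_in[OF V] .
  have "med a b c \<in> A" using m abc assms(1) unfolding conv_def by blast
  moreover have "med a b c \<in> B" using m abc assms(2) unfolding conv_def by blast
  moreover have "med a b c \<in> C" using m abc assms(3) unfolding conv_def by blast
  ultimately show ?thesis by blast
qed

lemma helly: "finite \<F> \<Longrightarrow> \<forall>A\<in>\<F>. conv A \<Longrightarrow> \<forall>A\<in>\<F>. \<forall>B\<in>\<F>. A \<inter> B \<noteq> {} \<Longrightarrow> \<exists>x\<in>V. \<forall>A\<in>\<F>. x \<in> A"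
proof (induction "card \<F>" arbitrary: \<F> rule: less_induct)
  case less
  show ?case
  proof (cases "\<F> = {}")
    case True then show ?thesis using neV by blast
  next
    case False
    then obtain A where A: "A \<in> \<F>" by blast
    define \<F>0 where "\<F>0 = \<F> - {A}"
    define \<F>' where "\<F>' = (\<lambda>B. B \<inter> A) ` \<F>0"
    have "card \<F>0 < card \<F>" unfolding \<F>0_def by (rule card_Diff1_less[OF less.prems(1) A])
    then have lt: "card \<F>' < card \<F>" unfolding \<F>'_def using card_image_le less.prems(1) \<F>0_def
      by (metis finite_Diff le_less_trans)
    have fin: "finite \<F>'" unfolding \<F>'_def \<F>0_def using less.prems(1) by simp
    have cv: "\<forall>B\<in>\<F>'. conv B" unfolding \<F>'_def \<F>0_def using less.prems(2) A conv_Int by blast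
    have pw: "\<forall>B\<in>\<F>'. \<forall>B'\<in>\<F>'. B \<inter> B' \<noteq> {}"
    proof (intro ballI)
      fix B B' assume "B \<in> \<F>'" "B' \<in> \<F>'"
      then obtain C C' where C: "C \<in> \<F>" "C' \<in> \<F>" "B = C \<inter> A" "B' = C' \<inter> A"
        unfolding \<F>'_def \<F>0_def by blast
      have "A \<inter> C \<inter> C' \<noteq> {}" using helly3[of A C C'] less.prems(2,3) A C by blast
      then show "B \<inter> B' \<noteq> {}" using C by blast
    qed
    obtain x where x: "x \<in> V" "\<forall>B\<in>\<F>'. x \<in> B" using less.hyps[OF lt fin cv pw] by blast
    show ?thesis
    proof (cases "\<F>0 = {}")
      case True
      then have "\<F> = {A}" using A \<F>0_def by blast
      moreover obtain y where "y \<in> A" using less.prems(3) A by blast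
      moreover have "A \<subseteq> V" using less.prems(2) A unfolding conv_def by blast
      ultimately show ?thesis by blast
    next
      case False
      then obtain C where "C \<in> \<F>0" by blast
      then have "x \<in> A" using x unfolding \<F>'_def by blast
      moreover have "\<forall>B\<in>\<F>0. x \<in> B" using x unfolding \<F>'_def by blast
      ultimately show ?thesis using x(1) \<F>0_def by blast
    qed
  qed
qed

lemma main_loc: assumes unb: "\<forall>C\<in>theta_classes adj. 2 * Min (card ` halfspaces V adj C) < card V"
  shows "\<exists>!v0. v0 \<in> V \<and> (\<forall>C\<in>theta_classes adj. in_majority_halfspace V adj C v0)"
proof -
  have cls: "\<And>C. C \<in> theta_classes adj \<Longrightarrow> \<exists>a b. adj a b \<and> C = F a b \<and> card V < 2 * card (W a b)"
  proof -
    fix C assume C: "C \<in> theta_classes adj"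
    then obtain a b where ab: "adj a b" "C = F a b" using classes_F by blast
    have "2 * Min {card (W a b), card (W b a)} < card V" using unb C ab halfsp by auto
    moreover have "Min {card (W a b), card (W b a)} = min (card (W a b)) (card (W b a))" by simp
    ultimately have "card V < 2 * card (W a b) \<or> card V < 2 * card (W b a)" using W_card[OF ab(1)]
      unfolding min_def by (auto split: if_splits)
    then show "\<exists>a b. adj a b \<and> C = F a b \<and> card V < 2 * card (W a b)"
      using ab F_sym adj_sym by metis
  qed
  define \<M> where "\<M> = {H. \<exists>a b. adj a b \<and> F a b \<in> theta_classes adj \<and> H = W a b \<and> card V < 2 * card H}"
  have fin: "finite \<M>"
  proof -
    have "\<M> \<subseteq> Pow V" unfolding \<M>_def using WV by blast
    then show ?thesis using finV finite_subset by blast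
  qed
  have cv: "\<forall>A\<in>\<M>. conv A" unfolding \<M>_def using conv_W by blast
  have pw: "\<forall>A\<in>\<M>. \<forall>B\<in>\<M>. A \<inter> B \<noteq> {}"
  proof (intro ballI)
    fix A B assume "A \<in> \<M>" "B \<in> \<M>"
    then have h: "A \<subseteq> V" "B \<subseteq> V" "card V < 2 * card A" "card V < 2 * card B"
      unfolding \<M>_def using WV by blast+
    have fA: "finite A" "finite B" using h finV finite_subset by blast+
    have "card (A \<union> B) \<le> card V" using h finV card_mono by (meson Un_least)
    moreover have "card A + card B = card (A \<union> B) + card (A \<inter> B)" using card_Un_Int fA by blast
    ultimately have "card (A \<inter> B) \<noteq> 0" using h by linarith
    then show "A \<inter> B \<noteq> {}" by force
  qed
  obtain v0 where v0: "v0 \<in> V" "\<forall>H\<in>\<M>. v0 \<in> H" using helly[OF fin cv pw] by blast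
  have ex: "\<forall>C\<in>theta_classes adj. in_majority_halfspace V adj C v0"
  proof
    fix C assume C: "C \<in> theta_classes adj"
    then obtain a b where ab: "adj a b" "C = F a b" "card V < 2 * card (W a b)" using cls by blast
    have "W a b \<in> \<M>" unfolding \<M>_def using ab C by blast
    then have "v0 \<in> W a b" using v0 by blast
    then show "in_majority_halfspace V adj C v0" using maj ab by blast
  qed
  have un: "u = v" if u: "u \<in> V" "\<forall>C\<in>theta_classes adj. in_majority_halfspace V adj C u"
    and v: "v \<in> V" "\<forall>C\<in>theta_classes adj. in_majority_halfspace V adj C v" for u v
  proof (rule ccontr)
    assume ne: "u \<noteq> v"
    then have "d u v \<noteq> 0" using d0_eq u v by blast
    then obtain j where j: "d u v = Suc j" using not0_implies_Suc by blast
    obtain b where b: "adj u b" "d b v = j" using d_step[OF u(1) v(1) j] by blast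
    have uW: "u \<in> W u b" using a_W[OF b(1)] .
    have vW: "v \<in> W b u" unfolding W_def using j b v(1) d_sym by simp
    have "theta adj `` {{u,b}} \<in> theta_classes adj"
      unfolding theta_classes_def edges_def using b(1) by (auto intro: quotientI)
    then have C: "F u b \<in> theta_classes adj" using class_F[OF b(1)] by simp
    have cu: "component V (R u b) u = W u b" using comp_W[OF b(1) uW] .
    have cv: "component V (R u b) v = W b u" using comp_W'[OF b(1) vW] .
    have hs: "halfspaces V adj (F u b) = {W u b, W b u}" using halfsp[OF b(1)] .
    have "card (W b u) < card (W u b)"
      using u(2) C cu hs W_ne_other[OF b(1)] unfolding in_majority_halfspace_def by auto
    moreover have "card (W u b) < card (W b u)"
      using v(2) C cv hs W_ne_other[OF b(1)] unfolding in_majority_halfspace_def by auto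
    ultimately show False by simp
  qed
  show ?thesis using v0(1) ex un by blast
qed

end

theorem mainTheorem5:
  fixes f :: "nat \<Rightarrow> nat" and V :: "'a set" and adj :: "'a \<Rightarrow> 'a \<Rightarrow> bool"
  assumes "\<forall>k>0. f k > 0"
    and "in_U f V adj"
    and "f (card V) \<ge> 2"
  shows "\<exists>!v0. v0 \<in> V \<and> (\<forall>C\<in>theta_classes adj. in_majority_halfspace V adj C v0)"
proof -
  have mgV: "mg V adj" using assms(2) unfolding in_U_def by (simp add: mg.intro)
  have unb: "\<forall>C\<in>theta_classes adj. 2 * Min (card ` halfspaces V adj C) < card V"
  proof
    fix C assume C: "C \<in> theta_classes adj"
    then have nb: "real (Min (card ` halfspaces V adj C)) < real (card V) / real (f (card V))"
      using assms(2) unfolding in_U_def f_balanced_def by auto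
    have f2: "real (f (card V)) \<ge> 2" using assms(3) by simp
    have "real (card V) / real (f (card V)) \<le> real (card V) / 2"
      using f2 by (intro divide_left_mono) auto
    then have "real (Min (card ` halfspaces V adj C)) < real (card V) / 2" using nb by linarith
    then have "real (2 * Min (card ` halfspaces V adj C)) < real (card V)" by simp
    then show "2 * Min (card ` halfspaces V adj C) < card V" by linarith
  qed
  show ?thesis using mg.main_loc[OF mgV unb] .
qed

end
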